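(* Assume $f<\frac{n}{3}$ and that the protocol satisfies the following requirement (R). Let $v_p$ be any validator that is honest at the time it sends a PROPOSE message for chain $\chi_p$ in a slot $t$ with $4\Delta t\ge\max(\mathsf{GST},\mathsf{GAT})+4\Delta$. Then chain $\chi_p$ is justified at slot $t+1$ (i.e., the checkpoint $(\chi_p,t+1)$ becomes justified), and finalized at slot $t+2$. In particular, for every validator $v_i\in H_{4\Delta(t+2)+2\Delta}$, $\chi_p\preceq\chi^{\mathrm{fin},4\Delta(t+2)+2\Delta}_i$ and $\mathsf{txpool}^{4\Delta t}\subseteq\chi^{\mathrm{fin},4\Delta(t+2)+2\Delta}_i$. Requirement (R): (R1) In any slot $t'$, if an always-honest validator $v_i$ casts an FFG-vote $\mathcal{S}_i\to\mathcal{T}_i$ during round $r$, then (a) the vote is valid; (b) there is a set of messages $\mathcal{V}^{\mathsf{FFGvote},t'}_i\subseteq\mathcal{V}^r_i$ with $\mathcal{S}_i=\mathrm{GJ}(\mathcal{V}^{\mathsf{FFGvote},t'}_i)$; (c) $\mathcal{T}_i.c=t'$. (R2) If a PROPOSE message for chain $\chi_p$ is sent in round $4\Delta t\ge\max(\mathsf{GST},\mathsf{GAT})+\Delta$ by a proposer honest in that round, then: (a) $\chi_p$ includes all transactions in $\mathsf{txpool}^{4\Delta t}$; (b) in slot $t$, all always-honest validators cast valid FFG-votes with the same source checkpoint $\mathcal{S}$ and targets $\mathcal{T}_i$ with $\mathcal{T}_i.\chi\preceq\chi_p$; (c) in slot $t+1$: for every always-honest $v_i$, $\mathcal{V}^{\mathsf{FFGvote},t+1}_i$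 contains $\mathcal{V}^{\mathsf{FFGvote},t}_j$ for every always-honest $v_j$ and all FFG-votes sent by always-honest validators in slot $t$; and every always-honest $v_i$ sends an FFG-vote $\mathcal{S}_i\to\mathcal{T}_i$ with $\mathcal{T}_i.\chi=\chi_p$; (d) in slot $t+2$: for every always-honest $v_i$, $\mathcal{V}^{\mathsf{FFGvote},t+2}_i$ contains $\mathcal{V}^{\mathsf{FFGvote},t+1}_j$ for every always-honest $v_j$ and all FFG-votes sent by always-honest validators in slot $t+1$; and for every validator $v_i$ honest in round $r^*=4\Delta(t+2)+2\Delta$, (i) $\mathcal{V}^{r^*}_i$ contains all FFG-votes cast by always-honest validators in slot $t+2$ and (ii) $\chi^{\mathrm{fin},r^*}_i=\max\{\chi:\chi\preceq\mathrm{GF}(\mathcal{V}^{r^*}_i).\chi\ \wedge\ \chi.p\le\chi_p.p\}$.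
   Context: There are $n$ validators, at most $f$ of which are ever corrupted by an adaptive adversary; a validator is always-honest if it is never corrupted. Time is divided into rounds; slot $t$ consists of rounds $[4\Delta t,4\Delta(t+1))$ and proposals for slot $t$ are made at round $4\Delta t$. The network is partially synchronous: after an unknown time $\mathsf{GST}$, messages are delivered within $\Delta$ rounds; after an unknown time $\mathsf{GAT}$, all validators are always awake. $H_r$ denotes the set of honest validators active (awake and having completed joining) at round $r$. $\mathcal{V}^r_i$ is the view (set of messages received) of $v_i$ at round $r$; $\chi^{\mathrm{fin},r}_i$ is the finalized chain output by $v_i$ at round $r$; $\mathsf{txpool}^r$ is the (ever-growing) set of transactions available at round $r$, and a transaction is in a chain if it is in one of its blocks. Blocks $(b,p)$, chains identified with their last block, $\chi.p$ = slot of the last block, $\preceq$ = prefix. Checkpoints $\mathcal{C}=(\chi,c)$; FFG-vote $\mathcal{C}_1\to\mathcal{C}_2$ valid iff $\mathcal{C}_1.c<\mathcal{C}_2.c$ and $\mathcal{C}_1.\chi\preceq\mathcal{C}_2.\chi$. In a view $\mathcal{V}$: $\mathcal{C}$ is justified iff $\mathcal{C}=(B_{\text{genesis}},0)$ or there are votes in $\mathcal{V}$ from at least $\frac{2}{3}n$ distinct validators with valid FFG-votes $\mathcal{S}\to\mathcal{T}$, $\mathcal{S}$ justified in $\mathcal{V}$, $\mathcal{S}.\chi\preceq\mathcal{C}.\chi\preceq\mathcal{T}.\chi$, $\mathcal{T}.c=\mathcal{C}.c$; $\mathcal{C}$ is finalized iff $\mathcal{C}=(B_{\text{genesis}},0)$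 or $\mathcal{C}$ is justified and there are votes in $\mathcal{V}$ from at least $\frac{2}{3}n$ distinct validators with valid FFG-votes $\mathcal{C}\to\mathcal{T}$, $\mathcal{T}.c=\mathcal{C}.c+1$. Checkpoints are preordered by $\mathcal{C}\le\mathcal{C}'$ iff $\mathcal{C}.c<\mathcal{C}'.c$ or ($\mathcal{C}.c=\mathcal{C}'.c$ and $\mathcal{C}.\chi.p\le\mathcal{C}'.\chi.p$). $\mathrm{GJ}(\mathcal{V})$ (resp. $\mathrm{GF}(\mathcal{V})$) is a maximal justified (resp. finalized) checkpoint in $\mathcal{V}$ for this preorder, ties broken arbitrarily. A chain $\chi$ is justified (finalized) if $\chi=\mathcal{C}.\chi$ for a justified (finalized) checkpoint $\mathcal{C}$. *)

theory Defs
  imports Main "HOL-Library.Sublist"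
begin

text \<open>A block is a pair (b, p): its content b (the set of transactions it contains)
  and its slot p.  A chain is the sequence of blocks from the genesis block to its
  last block (so a chain is identified with its last block); slots strictly
  increase along a chain.\<close>

type_synonym 'tx block = "'tx set \<times> nat"

definition genesis_block :: "'tx block" where
  "genesis_block = ({}, 0)"

typedef 'tx chain =
  "{xs :: 'tx block list. xs \<noteq> [] \<and> hd xs = genesis_block \<and>
      sorted_wrt (\<lambda>a b. snd a < snd b) xs}"
  by (rule exI[of _ "[genesis_block]"]) simp

definition genesis_chain :: "'tx chain" where
  "genesis_chain = Abs_chain [genesis_block]"

definition chain_prefix :: "'tx chain \<Rightarrow> 'tx chain \<Rightarrow> bool" where
  "chain_prefix c1 c2 \<longleftrightarrow> prefix (Rep_chain c1) (Rep_chain c2)"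

definition chain_slot :: "'tx chain \<Rightarrow> nat" where
  "chain_slot c = snd (last (Rep_chain c))"

definition tx_in_chain :: "'tx \<Rightarrow> 'tx chain \<Rightarrow> bool" where
  "tx_in_chain tx c \<longleftrightarrow> (\<exists>b \<in> set (Rep_chain c). tx \<in> fst b)"

type_synonym 'tx checkpoint = "'tx chain \<times> nat"

definition valid_ffg :: "'tx checkpoint \<Rightarrow> 'tx checkpoint \<Rightarrow> bool" where
  "valid_ffg S T \<longleftrightarrow> snd S < snd T \<and> chain_prefix (fst S) (fst T)"

datatype ('v, 'tx) msg =
    FFGVote 'v "'tx checkpoint" "'tx checkpoint"
  | Propose 'v "'tx chain"

text \<open>Justification in a view; n = CARD('v) is the number of validators.\<close>
inductive justified :: "('v::finite, 'tx) msg set \<Rightarrow> 'tx checkpoint \<Rightarrow> bool"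
  for V :: "('v, 'tx) msg set" where
  genesis: "justified V (genesis_chain, 0)"
| votes: "\<lbrakk> 3 * card W \<ge> 2 * card (UNIV :: 'v set);
           \<forall>v\<in>W. \<exists>S T. FFGVote v S T \<in> V \<and> valid_ffg S T \<and> justified V S \<and>
                  chain_prefix (fst S) (fst C) \<and> chain_prefix (fst C) (fst T) \<and>
                  snd T = snd C \<rbrakk>
          \<Longrightarrow> justified V C"

definition finalized :: "('v::finite, 'tx) msg set \<Rightarrow> 'tx checkpoint \<Rightarrow> bool" where
  "finalized V C \<longleftrightarrow> C = (genesis_chain, 0) \<or>
     (justified V C \<and>
      (\<exists>W :: 'v set. 3 * card W \<ge> 2 * card (UNIV :: 'v set) \<and>
         (\<forall>v\<in>W. \<exists>T. FFGVote v C T \<in> V \<and> valid_ffg C T \<and> snd T = snd C + 1)))"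

definition cp_le :: "'tx checkpoint \<Rightarrow> 'tx checkpoint \<Rightarrow> bool" where
  "cp_le C C' \<longleftrightarrow> snd C < snd C' \<or> (snd C = snd C' \<and> chain_slot (fst C) \<le> chain_slot (fst C'))"

text \<open>C is a possible value of GJ(V) (resp. GF(V)): a maximal justified (finalized)
  checkpoint; ties are broken arbitrarily, so any maximal one may be chosen.\<close>
definition is_GJ :: "('v::finite, 'tx) msg set \<Rightarrow> 'tx checkpoint \<Rightarrow> bool" where
  "is_GJ V C \<longleftrightarrow> justified V C \<and> (\<forall>C'. justified V C' \<longrightarrow> cp_le C' C)"

definition is_GF :: "('v::finite, 'tx) msg set \<Rightarrow> 'tx checkpoint \<Rightarrow> bool" where
  "is_GF V C \<longleftrightarrow> finalized V C \<and> (\<forall>C'. finalized V C' \<longrightarrow> cp_le C' C)"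

definition slot_of :: "nat \<Rightarrow> nat \<Rightarrow> nat" where
  "slot_of \<Delta> r = r div (4 * \<Delta>)"

definition always_honest :: "('v \<Rightarrow> nat \<Rightarrow> bool) \<Rightarrow> 'v \<Rightarrow> bool" where
  "always_honest honest i \<longleftrightarrow> (\<forall>r. honest i r)"

text \<open>H_r: honest validators that are active (awake and joined) at round r.\<close>
definition H :: "('v \<Rightarrow> nat \<Rightarrow> bool) \<Rightarrow> ('v \<Rightarrow> nat \<Rightarrow> bool) \<Rightarrow> nat \<Rightarrow> 'v set" where
  "H honest active r = {i. honest i r \<and> active i r}"

text \<open>cast i r: the FFG-votes (source, target) cast by validator i during round r.
  votes_in_slot: the FFG-votes cast by i during slot t.\<close>
definition votes_in_slot ::
  "nat \<Rightarrow> ('v \<Rightarrow> nat \<Rightarrow> ('tx checkpoint \<times> 'tx checkpoint) set) \<Rightarrow> 'v \<Rightarrow> nat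
     \<Rightarrow> ('tx checkpoint \<times> 'tx checkpoint) set" where
  "votes_in_slot \<Delta> cast i t = {ST. \<exists>r. slot_of \<Delta> r = t \<and> ST \<in> cast i r}"

text \<open>Requirement (R1). Vffg i t is the set V^{FFGvote,t}_i.\<close>
definition R1 ::
  "nat \<Rightarrow> ('v::finite \<Rightarrow> nat \<Rightarrow> bool) \<Rightarrow> ('v \<Rightarrow> nat \<Rightarrow> ('v, 'tx) msg set)
   \<Rightarrow> ('v \<Rightarrow> nat \<Rightarrow> ('tx checkpoint \<times> 'tx checkpoint) set)
   \<Rightarrow> ('v \<Rightarrow> nat \<Rightarrow> ('v, 'tx) msg set) \<Rightarrow> bool" where
  "R1 \<Delta> honest V cast Vffg \<longleftrightarrow>
     (\<forall>t' i r S T. always_honest honest i \<and> slot_of \<Delta> r = t' \<and> (S, T) \<in> cast i r \<longrightarrow>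
        valid_ffg S T \<and> Vffg i t' \<subseteq> V i r \<and> is_GJ (Vffg i t') S \<and> snd T = t')"

text \<open>The part of (R2) concerning slot t' + 1 following slot t'.\<close>
definition next_slot_views ::
  "nat \<Rightarrow> ('v \<Rightarrow> nat \<Rightarrow> bool) \<Rightarrow> ('v \<Rightarrow> nat \<Rightarrow> ('tx checkpoint \<times> 'tx checkpoint) set)
   \<Rightarrow> ('v \<Rightarrow> nat \<Rightarrow> ('v, 'tx) msg set) \<Rightarrow> nat \<Rightarrow> bool" where
  "next_slot_views \<Delta> honest cast Vffg t' \<longleftrightarrow>
     (\<forall>i. always_honest honest i \<longrightarrow>
        (\<forall>j. always_honest honest j \<longrightarrow> Vffg j t' \<subseteq> Vffg i (t' + 1)) \<and>
        (\<forall>j S T. always_honest honest j \<and> (S, T) \<in> votes_in_slot \<Delta> cast j t' \<longrightarrow>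
            FFGVote j S T \<in> Vffg i (t' + 1)))"

text \<open>Requirement (R2). proposes p r chi: validator p sends a PROPOSE message for
  chain chi in round r.\<close>
definition R2 ::
  "nat \<Rightarrow> nat \<Rightarrow> nat \<Rightarrow> ('v::finite \<Rightarrow> nat \<Rightarrow> bool) \<Rightarrow> ('v \<Rightarrow> nat \<Rightarrow> ('v, 'tx) msg set)
   \<Rightarrow> ('v \<Rightarrow> nat \<Rightarrow> ('tx checkpoint \<times> 'tx checkpoint) set)
   \<Rightarrow> ('v \<Rightarrow> nat \<Rightarrow> ('v, 'tx) msg set) \<Rightarrow> ('v \<Rightarrow> nat \<Rightarrow> 'tx chain)
   \<Rightarrow> (nat \<Rightarrow> 'tx set) \<Rightarrow> ('v \<Rightarrow> nat \<Rightarrow> 'tx chain \<Rightarrow> bool) \<Rightarrow> bool" where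
  "R2 \<Delta> GST GAT honest V cast Vffg fin txpool proposes \<longleftrightarrow>
     (\<forall>t p chi_p. 4 * \<Delta> * t \<ge> max GST GAT + \<Delta> \<and> honest p (4 * \<Delta> * t) \<and>
                 proposes p (4 * \<Delta> * t) chi_p \<longrightarrow>
        \<comment> \<open>(a)\<close>
        (\<forall>tx \<in> txpool (4 * \<Delta> * t). tx_in_chain tx chi_p) \<and>
        \<comment> \<open>(b)\<close>
        (\<exists>S. \<forall>i. always_honest honest i \<longrightarrow>
            (\<exists>T. (S, T) \<in> votes_in_slot \<Delta> cast i t \<and> valid_ffg S T \<and>
                 chain_prefix (fst T) chi_p)) \<and>
        \<comment> \<open>(c)\<close>
        next_slot_views \<Delta> honest cast Vffg t \<and>
        (\<forall>i. always_honest honest i \<longrightarrow>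
            (\<exists>S T. (S, T) \<in> votes_in_slot \<Delta> cast i (t + 1) \<and> fst T = chi_p)) \<and>
        \<comment> \<open>(d)\<close>
        next_slot_views \<Delta> honest cast Vffg (t + 1) \<and>
        (\<forall>i. honest i (4 * \<Delta> * (t + 2) + 2 * \<Delta>) \<longrightarrow>
           (let rs = 4 * \<Delta> * (t + 2) + 2 * \<Delta> in
             (\<forall>j S T. always_honest honest j \<and> (S, T) \<in> votes_in_slot \<Delta> cast j (t + 2) \<longrightarrow>
                 FFGVote j S T \<in> V i rs) \<and>
             (\<exists>C. is_GF (V i rs) C \<and>
                 chain_prefix (fin i rs) (fst C) \<and> chain_slot (fin i rs) \<le> chain_slot chi_p \<and>
                 (\<forall>chi. chain_prefix chi (fst C) \<and> chain_slot chi \<le> chain_slot chi_p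
                        \<longrightarrow> chain_prefix chi (fin i rs))))))"

end

theory Submission
  imports Defs
begin


lemma justified_mono:
  assumes "justified U C" "U \<subseteq> U'"
  shows "justified U' C"
  using assms
proof (induction rule: justified.induct)
  case genesis
  show ?case by (rule justified.genesis)
next
  case (votes W C)
  show ?case
    apply (rule justified.votes[of W])
    using votes by blast+
qed

lemma prefix_refl_c: "chain_prefix c c"
  by (simp add: chain_prefix_def)

lemma prefix_trans_c: "chain_prefix a b \<Longrightarrow> chain_prefix b c \<Longrightarrow> chain_prefix a c"
  unfolding chain_prefix_def using prefix_order.order_trans by blast

lemma prefix_slot_eq:
  assumes "chain_prefix a b" "chain_slot b \<le> chain_slot a"
  shows "a = b"
proof -
  obtain zs where zs: "Rep_chain b = Rep_chain a @ zs"
    using assms(1) unfolding chain_prefix_def prefix_def by blast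
  have ra: "Rep_chain a \<noteq> []" using Rep_chain[of a] by simp
  have sb: "sorted_wrt (\<lambda>a b. snd a < snd b) (Rep_chain b)" using Rep_chain[of b] by simp
  have "zs = []"
  proof (rule ccontr)
    assume ne: "zs \<noteq> []"
    have l: "last (Rep_chain b) = last zs" using zs ne by simp
    have "last (Rep_chain a) \<in> set (Rep_chain a)" using ra by simp
    moreover have "last zs \<in> set zs" using ne by simp
    ultimately have "snd (last (Rep_chain a)) < snd (last zs)"
      using sb zs by (simp add: sorted_wrt_append)
    then show False using assms(2) l unfolding chain_slot_def by simp
  qed
  then show ?thesis using zs Rep_chain_inject[of b a] by simp
qed

lemma tx_prefix: "tx_in_chain tx a \<Longrightarrow> chain_prefix a b \<Longrightarrow> tx_in_chain tx b"
  unfolding tx_in_chain_def chain_prefix_def using set_mono_prefix by blast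

lemma quorum_honest:
  fixes W :: "'v::finite set"
  assumes "3 * card W \<ge> 2 * card (UNIV :: 'v set)" "3 * f < card (UNIV :: 'v set)"
    "card {i. \<not> P i} \<le> f"
  shows "\<exists>w\<in>W. P w"
proof (rule ccontr)
  assume "\<not> ?thesis"
  then have "W \<subseteq> {i. \<not> P i}" by auto
  then have "card W \<le> card {i. \<not> P i}" by (simp add: card_mono)
  then show False using assms by linarith
qed

lemma quorum_all:
  assumes "3 * f < card (UNIV :: 'v::finite set)" "card {i. \<not> P i} \<le> f"
  shows "3 * card {i::'v. P i} \<ge> 2 * card (UNIV :: 'v set)"
proof -
  have u: "{i::'v. P i} \<union> {i. \<not> P i} = UNIV" by auto
  have "card ({i::'v. P i} \<union> {i. \<not> P i}) = card {i::'v. P i} + card {i. \<not> P i}"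
    by (rule card_Un_disjoint) auto
  then have "card {i::'v. P i} + card {i. \<not> P i} = card (UNIV :: 'v set)" using u by simp
  then show ?thesis using assms by linarith
qed

lemma just_honest_vote:
  fixes U :: "('v::finite, 'tx) msg set"
  assumes "justified U C" "snd C \<noteq> 0" "3 * f < card (UNIV :: 'v set)"
    "card {i. \<not> P i} \<le> f"
  shows "\<exists>w S T. P w \<and> FFGVote w S T \<in> U \<and> valid_ffg S T \<and> justified U S \<and>
     chain_prefix (fst S) (fst C) \<and> chain_prefix (fst C) (fst T) \<and> snd T = snd C"
  using assms(1)
proof (cases rule: justified.cases)
  case genesis
  then show ?thesis using assms(2) by simp
next
  case (votes W)
  then obtain w where "w \<in> W" "P w" using quorum_honest[OF _ assms(3,4)] by blast
  then show ?thesis using votes by blast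
qed


lemma l1: "0 < (m::nat) \<Longrightarrow> r < m * (r div m + 1)"
proof -
  assume m: "0 < m"
  have e: "r = m * (r div m) + r mod m" by simp
  have l: "r mod m < m" using m by simp
  have "m * (r div m + 1) = m * (r div m) + m" by simp
  then show ?thesis using e l by linarith
qed

lemma l2: "0 < (d::nat) \<Longrightarrow> (4 * d * k + 2 * d) div (4 * d) = k"
proof -
  assume d: "0 < d"
  have "(4 * d * k + 2 * d) div (4 * d) = k + (2*d) div (4*d)"
    using d by (metis add.commute div_mult_self2 mult.commute mult_is_0 zero_neq_numeral gr_implies_not0)
  also have "(2*d) div (4*d) = 0" using d by simp
  finally show ?thesis by simp
qed

theorem theorem4p5:
  fixes n f \<Delta> GST GAT :: nat
    and honest active :: "'v::finite \<Rightarrow> nat \<Rightarrow> bool"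
    and V :: "'v \<Rightarrow> nat \<Rightarrow> ('v, 'tx) msg set"
    and cast :: "'v \<Rightarrow> nat \<Rightarrow> ('tx checkpoint \<times> 'tx checkpoint) set"
    and Vffg :: "'v \<Rightarrow> nat \<Rightarrow> ('v, 'tx) msg set"
    and fin :: "'v \<Rightarrow> nat \<Rightarrow> 'tx chain"
    and txpool :: "nat \<Rightarrow> 'tx set"
    and proposes :: "'v \<Rightarrow> nat \<Rightarrow> 'tx chain \<Rightarrow> bool"
    and p :: 'v and chi_p :: "'tx chain" and t :: nat
  assumes n_def: "n = card (UNIV :: 'v set)"
    and f_bound: "3 * f < n"
    and corrupt_bound: "card {i. \<not> always_honest honest i} \<le> f"
    and Delta_pos: "\<Delta> > 0"
    and adaptive: "\<And>i r r'. honest i r \<Longrightarrow> r' \<le> r \<Longrightarrow> honest i r'"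
    and txpool_mono: "\<And>r r'. r \<le> r' \<Longrightarrow> txpool r \<subseteq> txpool r'"
    and vote_at_most_once:
      "\<And>i t' a b. always_honest honest i \<Longrightarrow> a \<in> votes_in_slot \<Delta> cast i t'
          \<Longrightarrow> b \<in> votes_in_slot \<Delta> cast i t' \<Longrightarrow> a = b"
    and vote_after_GAT:
      "\<And>i t'. always_honest honest i \<Longrightarrow> 4 * \<Delta> * t' \<ge> GAT
          \<Longrightarrow> votes_in_slot \<Delta> cast i t' \<noteq> {}"
    and authentic:
      "\<And>i j r S T. always_honest honest i \<Longrightarrow> FFGVote i S T \<in> V j r
          \<Longrightarrow> \<exists>r' \<le> r. (S, T) \<in> cast i r'"
    and delivery_votes:
      "\<And>i j r r' S T. honest i r \<Longrightarrow> (S, T) \<in> cast i r \<Longrightarrow> j \<in> H honest active r'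
          \<Longrightarrow> r' \<ge> max r GST + \<Delta> \<Longrightarrow> FFGVote i S T \<in> V j r'"
    and delivery_views:
      "\<And>i j r r'. honest i r \<Longrightarrow> j \<in> H honest active r'
          \<Longrightarrow> r' \<ge> max r GST + \<Delta> \<Longrightarrow> V i r \<subseteq> V j r'"
    and R1: "R1 \<Delta> honest V cast Vffg"
    and R2: "R2 \<Delta> GST GAT honest V cast Vffg fin txpool proposes"
    and slot_late: "4 * \<Delta> * t \<ge> max GST GAT + 4 * \<Delta>"
    and p_honest: "honest p (4 * \<Delta> * t)"
    and p_proposes: "proposes p (4 * \<Delta> * t) chi_p"
  shows "\<forall>i \<in> H honest active (4 * \<Delta> * (t + 2) + 2 * \<Delta>).
           justified (V i (4 * \<Delta> * (t + 2) + 2 * \<Delta>)) (chi_p, t + 1) \<and>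
           finalized (V i (4 * \<Delta> * (t + 2) + 2 * \<Delta>)) (chi_p, t + 1) \<and>
           chain_prefix chi_p (fin i (4 * \<Delta> * (t + 2) + 2 * \<Delta>)) \<and>
           (\<forall>tx \<in> txpool (4 * \<Delta> * t). tx_in_chain tx (fin i (4 * \<Delta> * (t + 2) + 2 * \<Delta>)))"
  proof -
  define A where "A = always_honest honest"
  define rs where "rs = 4 * \<Delta> * (t + 2) + 2 * \<Delta>"
  have nq: "3 * f < card (UNIV :: 'v set)" using f_bound n_def by simp
  have cb: "card {i. \<not> A i} \<le> f" using corrupt_bound A_def by simp
  have QA: "3 * card {i. A i} \<ge> 2 * card (UNIV :: 'v set)"
    by (rule quorum_all[OF nq cb])
  have slot_rs: "slot_of \<Delta> rs = t + 2"
    unfolding slot_of_def rs_def using l2[OF Delta_pos, of "t + 2"] by (simp only:)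
  have R1': "\<And>i r S T. A i \<Longrightarrow> (S, T) \<in> cast i r \<Longrightarrow>
      valid_ffg S T \<and> Vffg i (slot_of \<Delta> r) \<subseteq> V i r \<and> is_GJ (Vffg i (slot_of \<Delta> r)) S
      \<and> snd T = slot_of \<Delta> r"
    using R1 unfolding R1_def A_def by blast
  have vis: "\<And>S T i t'. ((S, T) \<in> votes_in_slot \<Delta> cast i t') = (\<exists>r. slot_of \<Delta> r = t' \<and> (S, T) \<in> cast i r)"
    unfolding votes_in_slot_def by simp
  have late: "4 * \<Delta> * t \<ge> max GST GAT + \<Delta>" using slot_late by simp
  have R2t: "(\<forall>tx \<in> txpool (4 * \<Delta> * t). tx_in_chain tx chi_p) \<and>
        next_slot_views \<Delta> honest cast Vffg t \<and>
        (\<forall>i. always_honest honest i \<longrightarrow>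
            (\<exists>S T. (S, T) \<in> votes_in_slot \<Delta> cast i (t + 1) \<and> fst T = chi_p)) \<and>
        next_slot_views \<Delta> honest cast Vffg (t + 1) \<and>
        (\<forall>i. honest i (4 * \<Delta> * (t + 2) + 2 * \<Delta>) \<longrightarrow>
           (let rs = 4 * \<Delta> * (t + 2) + 2 * \<Delta> in
             (\<forall>j S T. always_honest honest j \<and> (S, T) \<in> votes_in_slot \<Delta> cast j (t + 2) \<longrightarrow>
                 FFGVote j S T \<in> V i rs) \<and>
             (\<exists>C. is_GF (V i rs) C \<and>
                 chain_prefix (fin i rs) (fst C) \<and> chain_slot (fin i rs) \<le> chain_slot chi_p \<and>
                 (\<forall>chi. chain_prefix chi (fst C) \<and> chain_slot chi \<le> chain_slot chi_p
                        \<longrightarrow> chain_prefix chi (fin i rs)))))"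
    using R2 late p_honest p_proposes unfolding R2_def by blast
  have txa: "\<forall>tx \<in> txpool (4 * \<Delta> * t). tx_in_chain tx chi_p" using R2t by blast
  have ex1: "\<And>w. A w \<Longrightarrow> \<exists>S T. (S, T) \<in> votes_in_slot \<Delta> cast w (t + 1) \<and> fst T = chi_p"
    using R2t A_def by blast
  have nsv0: "next_slot_views \<Delta> honest cast Vffg (t + 1)" using R2t by blast
  have e2: "t + 1 + 1 = t + 2" by simp
  have nsv: "\<forall>i. A i \<longrightarrow> (\<forall>j. A j \<longrightarrow> Vffg j (t + 1) \<subseteq> Vffg i (t + 2)) \<and>
        (\<forall>j S T. A j \<and> (S, T) \<in> votes_in_slot \<Delta> cast j (t + 1) \<longrightarrow> FFGVote j S T \<in> Vffg i (t + 2))"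
    using nsv0 unfolding next_slot_views_def A_def e2 by blast
  have stepA: "\<And>w S T. A w \<Longrightarrow> (S, T) \<in> votes_in_slot \<Delta> cast w (t + 1) \<Longrightarrow> fst T = chi_p"
  proof -
    fix w S T assume w: "A w" and m: "(S, T) \<in> votes_in_slot \<Delta> cast w (t + 1)"
    obtain S0 T0 where "(S0, T0) \<in> votes_in_slot \<Delta> cast w (t + 1)" "fst T0 = chi_p"
      using ex1[OF w] by blast
    then show "fst T = chi_p" using vote_at_most_once[of w "(S, T)" "t + 1" "(S0, T0)"] w m A_def
      by (simp add: A_def)
  qed
  have stepJ: "\<And>v. A v \<Longrightarrow> justified (Vffg v (t + 2)) (chi_p, t + 1)"
  proof -
    fix v assume v: "A v"
    show "justified (Vffg v (t + 2)) (chi_p, t + 1)"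
    proof (rule justified.votes[of "{i. A i}"])
      show "2 * card (UNIV :: 'v set) \<le> 3 * card {i. A i}" by (rule QA)
      show "\<forall>va\<in>{i. A i}. \<exists>S T. FFGVote va S T \<in> Vffg v (t + 2) \<and> valid_ffg S T \<and>
          justified (Vffg v (t + 2)) S \<and> chain_prefix (fst S) (fst (chi_p, t + 1)) \<and>
          chain_prefix (fst (chi_p, t + 1)) (fst T) \<and> snd T = snd (chi_p, t + 1)"
      proof
        fix w assume "w \<in> {i. A i}"
        then have w: "A w" by simp
        obtain S T where m: "(S, T) \<in> votes_in_slot \<Delta> cast w (t + 1)" and fT: "fst T = chi_p"
          using ex1[OF w] by blast
        obtain r where r: "slot_of \<Delta> r = t + 1" "(S, T) \<in> cast w r" using m vis by blast
        have R: "valid_ffg S T \<and> is_GJ (Vffg w (t + 1)) S \<and> snd T = t + 1"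
          using R1'[OF w r(2)] r(1) by simp
        have in1: "FFGVote w S T \<in> Vffg v (t + 2)"
          using nsv v w m by blast
        have sub: "Vffg w (t + 1) \<subseteq> Vffg v (t + 2)"
          using nsv v w by blast
        have js: "justified (Vffg v (t + 2)) S"
          using R sub justified_mono unfolding is_GJ_def by blast
        have pS: "chain_prefix (fst S) chi_p" using R fT unfolding valid_ffg_def by simp
        show "\<exists>S T. FFGVote w S T \<in> Vffg v (t + 2) \<and> valid_ffg S T \<and>
          justified (Vffg v (t + 2)) S \<and> chain_prefix (fst S) (fst (chi_p, t + 1)) \<and>
          chain_prefix (fst (chi_p, t + 1)) (fst T) \<and> snd T = snd (chi_p, t + 1)"
          apply (rule exI[of _ S], rule exI[of _ T])
          using in1 R js fT prefix_refl_c pS by auto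
      qed
    qed
  qed
  have stepS: "\<And>v S T. A v \<Longrightarrow> (S, T) \<in> votes_in_slot \<Delta> cast v (t + 2) \<Longrightarrow> S = (chi_p, t + 1)"
  proof -
    fix v S T assume v: "A v" and m: "(S, T) \<in> votes_in_slot \<Delta> cast v (t + 2)"
    obtain r where r: "slot_of \<Delta> r = t + 2" "(S, T) \<in> cast v r" using m vis by blast
    have R: "valid_ffg S T \<and> Vffg v (t + 2) \<subseteq> V v r \<and> is_GJ (Vffg v (t + 2)) S \<and> snd T = t + 2"
      using R1'[OF v r(2)] r(1) by simp
    have "cp_le (chi_p, t + 1) S" using R stepJ[OF v] unfolding is_GJ_def by blast
    moreover have "snd S < t + 2" using R unfolding valid_ffg_def by simp
    ultimately have sS: "snd S = t + 1" and cs: "chain_slot chi_p \<le> chain_slot (fst S)"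
      unfolding cp_le_def by auto
    have jS: "justified (Vffg v (t + 2)) S" using R unfolding is_GJ_def by blast
    obtain w S1 T1 where w: "A w" and mv: "FFGVote w S1 T1 \<in> Vffg v (t + 2)"
      and p1: "chain_prefix (fst S) (fst T1)" and sT1: "snd T1 = snd S"
      using just_honest_vote[OF jS _ nq cb] sS by auto
    have "FFGVote w S1 T1 \<in> V v r" using mv R by blast
    then obtain r' where r': "r' \<le> r" "(S1, T1) \<in> cast w r'" using authentic w A_def by blast
    have "snd T1 = slot_of \<Delta> r'" using R1'[OF w r'(2)] by simp
    then have "(S1, T1) \<in> votes_in_slot \<Delta> cast w (t + 1)" using vis r' sT1 sS by auto
    then have "fst T1 = chi_p" using stepA[OF w] by simp
    then have "fst S = chi_p" using prefix_slot_eq p1 cs by auto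
    then show "S = (chi_p, t + 1)" using sS by (metis prod.collapse)
  qed
  show ?thesis
  proof
    fix i assume iH: "i \<in> H honest active (4 * \<Delta> * (t + 2) + 2 * \<Delta>)"
    then have iH': "i \<in> H honest active rs" using rs_def by simp
    have hi: "honest i rs" using iH' unfolding H_def by simp
    have just: "justified (V i rs) (chi_p, t + 1)"
    proof (rule justified.votes[of "{i. A i}"])
      show "2 * card (UNIV :: 'v set) \<le> 3 * card {i. A i}" by (rule QA)
      show "\<forall>va\<in>{i. A i}. \<exists>S T. FFGVote va S T \<in> V i rs \<and> valid_ffg S T \<and>
          justified (V i rs) S \<and> chain_prefix (fst S) (fst (chi_p, t + 1)) \<and>
          chain_prefix (fst (chi_p, t + 1)) (fst T) \<and> snd T = snd (chi_p, t + 1)"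
      proof
        fix w assume "w \<in> {i. A i}"
        then have w: "A w" by simp
        have hw: "\<And>r. honest w r" using w unfolding A_def always_honest_def by simp
        obtain S T where m: "(S, T) \<in> votes_in_slot \<Delta> cast w (t + 1)" and fT: "fst T = chi_p"
          using ex1[OF w] by blast
        obtain r where r: "slot_of \<Delta> r = t + 1" "(S, T) \<in> cast w r" using m vis by blast
        have R: "valid_ffg S T \<and> Vffg w (t + 1) \<subseteq> V w r \<and> is_GJ (Vffg w (t + 1)) S \<and> snd T = t + 1"
          using R1'[OF w r(2)] r(1) by simp
        have "r < 4 * \<Delta> * (t + 2)" using l1[of "4 * \<Delta>" r] Delta_pos r(1)
          unfolding slot_of_def by simp
        moreover have "GST + \<Delta> \<le> 4 * \<Delta> * t" using late by simp
        ultimately have tm: "rs \<ge> max r GST + \<Delta>" unfolding rs_def by (simp add: algebra_simps)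
        have in1: "FFGVote w S T \<in> V i rs" using delivery_votes[OF hw r(2) iH' tm] .
        have sub: "V w r \<subseteq> V i rs" using delivery_views[OF hw iH' tm] .
        have js: "justified (V i rs) S"
          using R sub justified_mono unfolding is_GJ_def by blast
        have pS: "chain_prefix (fst S) chi_p" using R fT unfolding valid_ffg_def by simp
        show "\<exists>S T. FFGVote w S T \<in> V i rs \<and> valid_ffg S T \<and>
          justified (V i rs) S \<and> chain_prefix (fst S) (fst (chi_p, t + 1)) \<and>
          chain_prefix (fst (chi_p, t + 1)) (fst T) \<and> snd T = snd (chi_p, t + 1)"
          apply (rule exI[of _ S], rule exI[of _ T])
          using in1 R js fT prefix_refl_c pS by auto
      qed
    qed
    have d: "(\<forall>j S T. always_honest honest j \<and> (S, T) \<in> votes_in_slot \<Delta> cast j (t + 2) \<longrightarrow>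
                 FFGVote j S T \<in> V i rs) \<and>
             (\<exists>C. is_GF (V i rs) C \<and>
                 chain_prefix (fin i rs) (fst C) \<and> chain_slot (fin i rs) \<le> chain_slot chi_p \<and>
                 (\<forall>chi. chain_prefix chi (fst C) \<and> chain_slot chi \<le> chain_slot chi_p
                        \<longrightarrow> chain_prefix chi (fin i rs)))"
      using R2t hi unfolding rs_def Let_def by blast
    have finz: "finalized (V i rs) (chi_p, t + 1)"
      unfolding finalized_def
    proof (intro disjI2 conjI exI[of _ "{i. A i}"])
      show "justified (V i rs) (chi_p, t + 1)" by (rule just)
      show "2 * card (UNIV :: 'v set) \<le> 3 * card {i. A i}" by (rule QA)
      show "\<forall>v\<in>{i. A i}. \<exists>T. FFGVote v (chi_p, t + 1) T \<in> V i rs \<and>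
          valid_ffg (chi_p, t + 1) T \<and> snd T = snd (chi_p, t + 1) + 1"
      proof
        fix v assume "v \<in> {i. A i}"
        then have v: "A v" by simp
        have "4 * \<Delta> * (t + 2) \<ge> GAT" using late by (simp add: algebra_simps)
        then obtain ST where "ST \<in> votes_in_slot \<Delta> cast v (t + 2)"
          using vote_after_GAT v A_def by blast
        then obtain S T where m: "(S, T) \<in> votes_in_slot \<Delta> cast v (t + 2)" by (cases ST) auto
        have S: "S = (chi_p, t + 1)" using stepS[OF v m] .
        obtain r where r: "slot_of \<Delta> r = t + 2" "(S, T) \<in> cast v r" using m vis by blast
        have R: "valid_ffg S T \<and> snd T = t + 2" using R1'[OF v r(2)] r(1) by simp
        have inV: "FFGVote v S T \<in> V i rs" using d v m A_def by blast
        show "\<exists>T. FFGVote v (chi_p, t + 1) T \<in> V i rs \<and>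
          valid_ffg (chi_p, t + 1) T \<and> snd T = snd (chi_p, t + 1) + 1"
          apply (rule exI[of _ T]) using R S inV by simp
      qed
    qed
    obtain C where gf: "is_GF (V i rs) C"
       and fp: "\<forall>chi. chain_prefix chi (fst C) \<and> chain_slot chi \<le> chain_slot chi_p
                        \<longrightarrow> chain_prefix chi (fin i rs)"
      using d by blast
    have cl: "cp_le (chi_p, t + 1) C" using gf finz unfolding is_GF_def by blast
    then have sC: "snd C \<ge> t + 1" unfolding cp_le_def by auto
    have "finalized (V i rs) C" using gf unfolding is_GF_def by blast
    moreover have "C \<noteq> (genesis_chain, 0)" using sC by auto
    ultimately have jC: "justified (V i rs) C" unfolding finalized_def by blast
    have nz: "snd C \<noteq> 0" using sC by simp
    have "\<exists>w S T. A w \<and> FFGVote w S T \<in> V i rs \<and> valid_ffg S T \<and> justified (V i rs) S \<and>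
       chain_prefix (fst S) (fst C) \<and> chain_prefix (fst C) (fst T) \<and> snd T = snd C"
      by (rule just_honest_vote[OF jC nz nq cb])
    then obtain w S1 T1 where w: "A w" and mv: "FFGVote w S1 T1 \<in> V i rs"
      and p1: "chain_prefix (fst S1) (fst C)" and p2: "chain_prefix (fst C) (fst T1)"
      and sT1: "snd T1 = snd C"
      by blast
    obtain r' where r': "r' \<le> rs" "(S1, T1) \<in> cast w r'" using authentic[of w S1 T1 i rs] w mv unfolding A_def by blast
    have sl: "snd T1 = slot_of \<Delta> r'" using R1'[OF w r'(2)] by simp
    have "slot_of \<Delta> r' \<le> slot_of \<Delta> rs" unfolding slot_of_def using r'(1) by (simp add: div_le_mono)
    then have "snd C \<le> t + 2" using sl sT1 slot_rs by simp
    then have "snd C = t + 1 \<or> snd C = t + 2" using sC by linarith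
    then have cpC: "chain_prefix chi_p (fst C)"
    proof
      assume e: "snd C = t + 1"
      then have "(S1, T1) \<in> votes_in_slot \<Delta> cast w (t + 1)" unfolding votes_in_slot_def using r'(2) sl sT1 e by auto
      then have "fst T1 = chi_p" using stepA[OF w] by simp
      moreover have "chain_slot chi_p \<le> chain_slot (fst C)" using cl e unfolding cp_le_def by simp
      ultimately have "fst C = chi_p" using prefix_slot_eq p2 by auto
      then show ?thesis using prefix_refl_c by simp
    next
      assume e: "snd C = t + 2"
      then have "(S1, T1) \<in> votes_in_slot \<Delta> cast w (t + 2)" unfolding votes_in_slot_def using r'(2) sl sT1 e by auto
      then have "S1 = (chi_p, t + 1)" using stepS[OF w] by simp
      then show ?thesis using p1 by simp
    qed
    have pf: "chain_prefix chi_p (fin i rs)" using fp cpC prefix_refl_c by blast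
    have tx: "\<forall>tx \<in> txpool (4 * \<Delta> * t). tx_in_chain tx (fin i rs)"
    proof
      fix tx assume h: "tx \<in> txpool (4 * \<Delta> * t)"
      show "tx_in_chain tx (fin i rs)" by (rule tx_prefix[OF bspec[OF txa h] pf])
    qed
    have all: "justified (V i rs) (chi_p, t + 1) \<and> finalized (V i rs) (chi_p, t + 1) \<and>
       chain_prefix chi_p (fin i rs) \<and> (\<forall>tx \<in> txpool (4 * \<Delta> * t). tx_in_chain tx (fin i rs))"
      by (intro conjI just finz pf tx)
    show "justified (V i (4 * \<Delta> * (t + 2) + 2 * \<Delta>)) (chi_p, t + 1) \<and>
           finalized (V i (4 * \<Delta> * (t + 2) + 2 * \<Delta>)) (chi_p, t + 1) \<and>
           chain_prefix chi_p (fin i (4 * \<Delta> * (t + 2) + 2 * \<Delta>)) \<and>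
           (\<forall>tx \<in> txpool (4 * \<Delta> * t). tx_in_chain tx (fin i (4 * \<Delta> * (t + 2) + 2 * \<Delta>)))"
      using all unfolding rs_def .
  qed
qed

end
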